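(* Let $Y=g(X+\delta)+\epsilon$, where $X,\delta,\epsilon$ are independent random variables, $X$ has a density with respect to Lebesgue measure, $\delta$ has a density with respect to a $\sigma$-finite Borel measure $\mu$, and $\epsilon$ has a density with respect to Lebesgue measure. Let $p\in(0,1)$ and $y_0$ with $\mathbb{P}(Y\le y_0)=p$. If $g$ is non-decreasing, then an optimal predictor of $\mathbb{I}(Y>y_0)$ can be written in the form $\mathbb{I}(X>x_0)$ for some constant $x_0$ that calibrates the predictor.
   Context: A predictor of $\mathbb{I}(Y>y_0)$ is an indicator $\mathbb{I}(h(X)>\tau)$ with $h$ Borel; it is calibrated at level $q$ if $\mathbb{P}(h(X)>\tau)=1-q$, and optimal (at level $q$) if its precision $\mathbb{P}(Y>y_0\mid h(X)>\tau)$ is at least that of every other predictor calibrated at level $q$. *)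

theory Defs
  imports "HOL-Probability.Probability"
begin

text \<open>A predictor of I(Y > y0) is an indicator I(h(X) > tau), h Borel. It is represented
  by the pair (h, tau).\<close>

definition calibrated ::
  "'a measure \<Rightarrow> ('a \<Rightarrow> real) \<Rightarrow> (real \<Rightarrow> real) \<Rightarrow> real \<Rightarrow> real \<Rightarrow> bool" where
  "calibrated M X h \<tau> q \<longleftrightarrow>
     h \<in> borel_measurable borel \<and> \<P>(\<omega> in M. h (X \<omega>) > \<tau>) = 1 - q"

definition precision ::
  "'a measure \<Rightarrow> ('a \<Rightarrow> real) \<Rightarrow> ('a \<Rightarrow> real) \<Rightarrow> real \<Rightarrow> (real \<Rightarrow> real) \<Rightarrow> real \<Rightarrow> real" where
  "precision M X Y y0 h \<tau> = \<P>(\<omega> in M. Y \<omega> > y0 \<bar> h (X \<omega>) > \<tau>)"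

definition optimal ::
  "'a measure \<Rightarrow> ('a \<Rightarrow> real) \<Rightarrow> ('a \<Rightarrow> real) \<Rightarrow> real \<Rightarrow> real \<Rightarrow> (real \<Rightarrow> real) \<Rightarrow> real \<Rightarrow> bool" where
  "optimal M X Y y0 q h \<tau> \<longleftrightarrow>
     calibrated M X h \<tau> q \<and>
     (\<forall>h' \<tau>'. calibrated M X h' \<tau>' q \<longrightarrow> precision M X Y y0 h' \<tau>' \<le> precision M X Y y0 h \<tau>)"

end

theory Submission
  imports Defs
begin

lemma atom_zero:
  assumes "prob_space M" "distributed M lborel X f"
  shows "measure (distr M borel X) {x} = 0"
proof -
  have m: "X \<in> borel_measurable M" using assms(2) by (simp add: distributed_def)
  have "measure (distr M borel X) {x} = measure (distr M lborel X) {x}"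
    using m by (simp add: measure_distr)
  also have "\<dots> = measure (density lborel f) {x}" using assms(2) by (simp add: distributed_def)
  also have "\<dots> = 0"
  proof -
    have "emeasure (density lborel f) {x} = 0"
      using assms(2) by (subst emeasure_density) (auto simp: distributed_def intro!: nn_integral_null_set)
    then show ?thesis by (simp add: measure_def)
  qed
  finally show ?thesis .
qed

theorem proposition4:
  fixes M :: "'a measure" and X \<delta> \<epsilon> :: "'a \<Rightarrow> real" and g :: "real \<Rightarrow> real"
    and \<mu> :: "real measure" and p y0 :: real
  assumes "prob_space M"
    and rv: "\<And>Z. Z \<in> {X, \<delta>, \<epsilon>} \<Longrightarrow> Z \<in> borel_measurable M"
    and indep: "prob_space.indep_vars M (\<lambda>_. borel)
                  (\<lambda>i::nat. if i = 0 then X else if i = 1 then \<delta> else \<epsilon>) {0, 1, 2}"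
    and densX: "\<exists>f. distributed M lborel X f"
    and mu: "sigma_finite_measure \<mu>" "sets \<mu> = sets borel"
    and densD: "\<exists>f. distributed M \<mu> \<delta> f"
    and densE: "\<exists>f. distributed M lborel \<epsilon> f"
    and p: "0 < p" "p < 1"
    and y0: "\<P>(\<omega> in M. g (X \<omega> + \<delta> \<omega>) + \<epsilon> \<omega> \<le> y0) = p"
    and mono: "mono g"
  shows "\<exists>x0. optimal M X (\<lambda>\<omega>. g (X \<omega> + \<delta> \<omega>) + \<epsilon> \<omega>) y0 p (\<lambda>x. x) x0"
proof -
  interpret prob_space M by fact
  have mX[measurable]: "X \<in> borel_measurable M" and md[measurable]: "\<delta> \<in> borel_measurable M"
    and me[measurable]: "\<epsilon> \<in> borel_measurable M" using rv by auto
  have mg[measurable]: "g \<in> borel_measurable borel" using mono by (rule borel_measurable_mono)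
  define D where "D = distr M borel X"
  interpret D: real_distribution D unfolding D_def by (rule real_distribution_distr) simp
  have cdfD: "cdf D x = prob {\<omega>\<in>space M. X \<omega> \<le> x}" for x
    unfolding cdf_def D_def by (subst measure_distr) (auto intro!: arg_cong[where f=prob])
  obtain f where f: "distributed M lborel X f" using densX by blast
  have cont: "isCont (cdf D) x" for x
    using atom_zero[OF \<open>prob_space M\<close> f] unfolding D_def by (simp add: D.isCont_cdf[unfolded D_def])
  have lim0: "(cdf D \<longlongrightarrow> 0) at_bot" by (rule D.cdf_lim_at_bot)
  have lim1: "(cdf D \<longlongrightarrow> 1) at_top" by (rule D.cdf_lim_at_top_prob)
  obtain a where a: "cdf D a < p"
    using order_tendstoD(2)[OF lim0 p(1)] by (auto simp: eventually_at_bot_linorder)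
  obtain N where N: "\<And>x. x \<ge> N \<Longrightarrow> cdf D x > p"
    using order_tendstoD(1)[OF lim1 p(2)] by (auto simp: eventually_at_top_linorder)
  define b where "b = max a N"
  have b: "cdf D b > p" "a \<le> b" using N unfolding b_def by auto
  obtain x0 where x0: "cdf D x0 = p"
    using IVT'[of "cdf D" a p b] a b cont by (auto intro: continuous_at_imp_continuous_on less_imp_le)
  have Px0: "prob {\<omega>\<in>space M. X \<omega> > x0} = 1 - p"
  proof -
    have "prob {\<omega>\<in>space M. X \<omega> > x0} = prob (space M - {\<omega>\<in>space M. X \<omega> \<le> x0})"
      by (auto intro!: arg_cong[where f=prob])
    also have "\<dots> = 1 - p" using x0 cdfD by (subst prob_compl) auto
    finally show ?thesis .
  qed
  define W where "W = (\<lambda>\<omega>. g (x0 + \<delta> \<omega>) + \<epsilon> \<omega>)"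
  have mW[measurable]: "W \<in> borel_measurable M" unfolding W_def by measurable
  have indW: "indep_var borel X borel W"
  proof -
    let ?F = "\<lambda>i::nat. if i = 0 then X else if i = 1 then \<delta> else \<epsilon>"
    have "indep_var (PiM {0} (\<lambda>_. borel)) (\<lambda>\<omega>. restrict (\<lambda>i. ?F i \<omega>) {0})
        (PiM {1,2} (\<lambda>_. borel)) (\<lambda>\<omega>. restrict (\<lambda>i. ?F i \<omega>) {1,2})"
      by (rule indep_var_restrict[OF indep]) auto
    then have "indep_var borel ((\<lambda>f. f 0) \<circ> (\<lambda>\<omega>. restrict (\<lambda>i. ?F i \<omega>) {0}))
        borel ((\<lambda>f. g (x0 + f 1) + f 2) \<circ> (\<lambda>\<omega>. restrict (\<lambda>i. ?F i \<omega>) {1,2}))"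
      by (rule indep_var_compose) measurable
    then show ?thesis by (simp add: comp_def W_def)
  qed
  have indP: "prob {\<omega>\<in>space M. X \<omega> \<in> S \<and> W \<omega> > y0} = prob {\<omega>\<in>space M. X \<omega> \<in> S} * prob {\<omega>\<in>space M. W \<omega> > y0}"
    if S: "S \<in> sets borel" for S
  proof -
    have "prob ((\<lambda>x. (X x, W x)) -` (S \<times> {y0<..}) \<inter> space M) =
      prob (X -` S \<inter> space M) * prob (W -` {y0<..} \<inter> space M)"
      by (rule indep_varD[OF indW S]) simp
    moreover have "(\<lambda>x. (X x, W x)) -` (S \<times> {y0<..}) \<inter> space M = {\<omega>\<in>space M. X \<omega> \<in> S \<and> W \<omega> > y0}"
      by auto
    moreover have "X -` S \<inter> space M = {\<omega>\<in>space M. X \<omega> \<in> S}" by auto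
    moreover have "W -` {y0<..} \<inter> space M = {\<omega>\<in>space M. W \<omega> > y0}" by auto
    ultimately show ?thesis by simp
  qed
  have split: "prob {\<omega>\<in>space M. P \<omega>} = prob {\<omega>\<in>space M. P \<omega> \<and> Q \<omega>} + prob {\<omega>\<in>space M. P \<omega> \<and> \<not> Q \<omega>}"
    if "{\<omega>\<in>space M. P \<omega>} \<in> events" "{\<omega>\<in>space M. Q \<omega>} \<in> events" for P Q
  proof -
    have "prob {\<omega>\<in>space M. P \<omega>} = prob ({\<omega>\<in>space M. P \<omega> \<and> Q \<omega>} \<union> {\<omega>\<in>space M. P \<omega> \<and> \<not> Q \<omega>})"
      by (auto intro!: arg_cong[where f=prob])
    also have "\<dots> = prob {\<omega>\<in>space M. P \<omega> \<and> Q \<omega>} + prob {\<omega>\<in>space M. P \<omega> \<and> \<not> Q \<omega>}"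
    proof (rule finite_measure_Union)
      have "{\<omega>\<in>space M. P \<omega> \<and> Q \<omega>} = {\<omega>\<in>space M. P \<omega>} \<inter> {\<omega>\<in>space M. Q \<omega>}" by auto
      then show "{\<omega>\<in>space M. P \<omega> \<and> Q \<omega>} \<in> events" using that by auto
      have "{\<omega>\<in>space M. P \<omega> \<and> \<not> Q \<omega>} = {\<omega>\<in>space M. P \<omega>} - {\<omega>\<in>space M. Q \<omega>}" by auto
      then show "{\<omega>\<in>space M. P \<omega> \<and> \<not> Q \<omega>} \<in> events" using that by auto
    qed auto
    finally show ?thesis .
  qed
  show ?thesis
  proof (intro exI[of _ x0])
    let ?Y = "\<lambda>\<omega>. g (X \<omega> + \<delta> \<omega>) + \<epsilon> \<omega>"
    have cal: "calibrated M X (\<lambda>x. x) x0 p" unfolding calibrated_def using Px0 by simp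
    show "optimal M X ?Y y0 p (\<lambda>x. x) x0"
      unfolding optimal_def
    proof (intro conjI allI impI cal)
      fix h' \<tau>' assume c: "calibrated M X h' \<tau>' p"
      have mh[measurable]: "h' \<in> borel_measurable borel" and PA: "prob {\<omega>\<in>space M. h' (X \<omega>) > \<tau>'} = 1 - p"
        using c unfolding calibrated_def by auto
      have evA: "{\<omega>\<in>space M. h' (X \<omega>) > \<tau>'} \<in> events" by measurable
      have evB: "{\<omega>\<in>space M. X \<omega> > x0} \<in> events" by measurable
      have evE: "{\<omega>\<in>space M. ?Y \<omega> > y0} \<in> events" by measurable
      have evEA: "{\<omega>\<in>space M. ?Y \<omega> > y0 \<and> h' (X \<omega>) > \<tau>'} \<in> events" by measurable
      have evEB: "{\<omega>\<in>space M. ?Y \<omega> > y0 \<and> X \<omega> > x0} \<in> events" by measurable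
      let ?z = "prob {\<omega>\<in>space M. W \<omega> > y0}"
      have s1: "prob {\<omega>\<in>space M. ?Y \<omega> > y0 \<and> h' (X \<omega>) > \<tau>'} =
        prob {\<omega>\<in>space M. (?Y \<omega> > y0 \<and> h' (X \<omega>) > \<tau>') \<and> X \<omega> > x0} +
        prob {\<omega>\<in>space M. (?Y \<omega> > y0 \<and> h' (X \<omega>) > \<tau>') \<and> \<not> X \<omega> > x0}"
        by (rule split[OF evEA evB])
      have s2: "prob {\<omega>\<in>space M. ?Y \<omega> > y0 \<and> X \<omega> > x0} =
        prob {\<omega>\<in>space M. (?Y \<omega> > y0 \<and> X \<omega> > x0) \<and> h' (X \<omega>) > \<tau>'} +
        prob {\<omega>\<in>space M. (?Y \<omega> > y0 \<and> X \<omega> > x0) \<and> \<not> h' (X \<omega>) > \<tau>'}"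
        by (rule split[OF evEB evA])
      have s3: "prob {\<omega>\<in>space M. h' (X \<omega>) > \<tau>'} =
        prob {\<omega>\<in>space M. h' (X \<omega>) > \<tau>' \<and> X \<omega> > x0} + prob {\<omega>\<in>space M. h' (X \<omega>) > \<tau>' \<and> \<not> X \<omega> > x0}"
        by (rule split[OF evA evB])
      have s4: "prob {\<omega>\<in>space M. X \<omega> > x0} =
        prob {\<omega>\<in>space M. X \<omega> > x0 \<and> h' (X \<omega>) > \<tau>'} + prob {\<omega>\<in>space M. X \<omega> > x0 \<and> \<not> h' (X \<omega>) > \<tau>'}"
        by (rule split[OF evB evA])
      have i1: "prob {\<omega>\<in>space M. (?Y \<omega> > y0 \<and> h' (X \<omega>) > \<tau>') \<and> \<not> X \<omega> > x0}
          \<le> prob {\<omega>\<in>space M. X \<omega> \<in> {x. h' x > \<tau>' \<and> \<not> x > x0} \<and> W \<omega> > y0}"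
      proof (rule finite_measure_mono)
        show "{\<omega>\<in>space M. X \<omega> \<in> {x. h' x > \<tau>' \<and> \<not> x > x0} \<and> W \<omega> > y0} \<in> events" by measurable
        show "{\<omega>\<in>space M. (?Y \<omega> > y0 \<and> h' (X \<omega>) > \<tau>') \<and> \<not> X \<omega> > x0}
          \<subseteq> {\<omega>\<in>space M. X \<omega> \<in> {x. h' x > \<tau>' \<and> \<not> x > x0} \<and> W \<omega> > y0}"
        proof safe
          fix \<omega> assume "\<omega> \<in> space M" "y0 < ?Y \<omega>" "\<not> X \<omega> > x0"
          then have "g (X \<omega> + \<delta> \<omega>) \<le> g (x0 + \<delta> \<omega>)" using mono by (auto intro: monoD)
          then show "y0 < W \<omega>" using \<open>y0 < ?Y \<omega>\<close> unfolding W_def by simp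
        qed
      qed
      have i2: "prob {\<omega>\<in>space M. X \<omega> \<in> {x. \<not> h' x > \<tau>' \<and> x > x0} \<and> W \<omega> > y0}
          \<le> prob {\<omega>\<in>space M. (?Y \<omega> > y0 \<and> X \<omega> > x0) \<and> \<not> h' (X \<omega>) > \<tau>'}"
      proof (rule finite_measure_mono)
        show "{\<omega>\<in>space M. (?Y \<omega> > y0 \<and> X \<omega> > x0) \<and> \<not> h' (X \<omega>) > \<tau>'} \<in> events" by measurable
        show "{\<omega>\<in>space M. X \<omega> \<in> {x. \<not> h' x > \<tau>' \<and> x > x0} \<and> W \<omega> > y0}
          \<subseteq> {\<omega>\<in>space M. (?Y \<omega> > y0 \<and> X \<omega> > x0) \<and> \<not> h' (X \<omega>) > \<tau>'}"
        proof safe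
          fix \<omega> assume "\<omega> \<in> space M" "y0 < W \<omega>" "X \<omega> > x0"
          then have "g (x0 + \<delta> \<omega>) \<le> g (X \<omega> + \<delta> \<omega>)" using mono by (auto intro: monoD)
          then show "y0 < ?Y \<omega>" using \<open>y0 < W \<omega>\<close> unfolding W_def by simp
        qed
      qed
      have e1: "prob {\<omega>\<in>space M. X \<omega> \<in> {x. h' x > \<tau>' \<and> \<not> x > x0} \<and> W \<omega> > y0}
          = prob {\<omega>\<in>space M. h' (X \<omega>) > \<tau>' \<and> \<not> X \<omega> > x0} * ?z"
        using indP[of "{x. h' x > \<tau>' \<and> \<not> x > x0}"] by simp
      have e2: "prob {\<omega>\<in>space M. X \<omega> \<in> {x. \<not> h' x > \<tau>' \<and> x > x0} \<and> W \<omega> > y0}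
          = prob {\<omega>\<in>space M. X \<omega> > x0 \<and> \<not> h' (X \<omega>) > \<tau>'} * ?z"
        using indP[of "{x. \<not> h' x > \<tau>' \<and> x > x0}"] by (simp add: conj_commute)
      have eq3: "prob {\<omega>\<in>space M. (?Y \<omega> > y0 \<and> h' (X \<omega>) > \<tau>') \<and> X \<omega> > x0} =
          prob {\<omega>\<in>space M. (?Y \<omega> > y0 \<and> X \<omega> > x0) \<and> h' (X \<omega>) > \<tau>'}"
        by (auto intro!: arg_cong[where f=prob])
      have eq4: "prob {\<omega>\<in>space M. h' (X \<omega>) > \<tau>' \<and> X \<omega> > x0} = prob {\<omega>\<in>space M. X \<omega> > x0 \<and> h' (X \<omega>) > \<tau>'}"
        by (auto intro!: arg_cong[where f=prob])
      have num: "prob {\<omega>\<in>space M. ?Y \<omega> > y0 \<and> h' (X \<omega>) > \<tau>'} \<le> prob {\<omega>\<in>space M. ?Y \<omega> > y0 \<and> X \<omega> > x0}"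
      proof -
        have "prob {\<omega>\<in>space M. h' (X \<omega>) > \<tau>' \<and> \<not> X \<omega> > x0} = prob {\<omega>\<in>space M. X \<omega> > x0 \<and> \<not> h' (X \<omega>) > \<tau>'}"
          using s3 s4 eq4 PA Px0 by linarith
        then have "prob {\<omega>\<in>space M. h' (X \<omega>) > \<tau>' \<and> \<not> X \<omega> > x0} * ?z = prob {\<omega>\<in>space M. X \<omega> > x0 \<and> \<not> h' (X \<omega>) > \<tau>'} * ?z"
          by simp
        then show ?thesis using s1 s2 i1 i2 e1 e2 eq3 by linarith
      qed
      show "precision M X ?Y y0 h' \<tau>' \<le> precision M X ?Y y0 (\<lambda>x. x) x0"
        unfolding precision_def cond_prob_def using num PA Px0 p
        by (auto intro: divide_right_mono)
    qed
  qed
qed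
end
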